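(* There is a constant $C>0$ such that the following holds. For all $0\le\delta<\delta'\le\delta_0$ and all $x,y\in\mathbb{R}^3$, \[ d_{\alpha_{\delta'}}(x,y)\le d_{\alpha_\delta}(x,y)\le d_{\alpha_{\delta'}}(x,y)+C|\delta'-\delta|. \] Consequently, for any two disjoint sets $\mathscr{P}=\{p_1,\dots,p_k\}$ and $\mathscr{N}=\{n_1,\dots,n_k\}$ of $k$ distinct points of $\mathbb{R}^3$, with $\mathscr{C}=\mathscr{P}\cup\mathscr{N}$, \[ |L(\mathscr{C},d_{\alpha_\delta})-L(\mathscr{C},d_{\alpha_{\delta'}})|\le Ck|\delta'-\delta| . \]
   Context: Let $\Omega\subset\mathbb{R}^3$ be a smooth bounded convex open set and $\omega$ a smooth bounded strictly convex open set with $\overline\omega\subset\Omega$. Fix $b\in(0,1)$. Let $\delta_0=10^{-2}\min\{1,\mathrm{dist}(\partial\omega,\partial\Omega)\}$. For $0<\delta\le\delta_0$ let $\omega_\delta=\omega+B(0,\delta)$ and $\alpha_\delta=b^2$ on $\omega_\delta$, $\alpha_\delta=1$ elsewhere. Let $\alpha_0=b^2$ on $\omega$ and $\alpha_0=1$ elsewhere. For a Borel $f:\mathbb{R}^3\to[b^2,1]$, $d_f(x,y)$ is the infimum of $\int_0^1f(\gamma(s))|\gamma'(s)|ds$ over Lipschitz arcs $\gamma$ joining $x$ and $y$. For a pseudodistance $d$, $L(\mathscr{C},d)=\min_{\sigma\in S_k}\sum_{i=1}^kd(p_i,n_{\sigma(i)})$, where $S_k$ is the set of permutations of $\{1,\dots,k\}$.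 *)

theory Defs
  imports "HOL-Analysis.Analysis" "HOL-Combinatorics.Permutations"
begin

type_synonym R3 = "real ^ 3"

text \<open>C-infinity real functions on R^3: differentiable everywhere, and all
  partial derivatives are again C-infinity (greatest fixed point).\<close>
coinductive smooth_fun :: "(R3 \<Rightarrow> real) \<Rightarrow> bool" where
  "g differentiable_on UNIV \<Longrightarrow>
   (\<And>i. smooth_fun (\<lambda>x. frechet_derivative g (at x) (axis i 1))) \<Longrightarrow> smooth_fun g"

definition smooth_boundary :: "R3 set \<Rightarrow> bool" where
  "smooth_boundary U \<longleftrightarrow>
     (\<forall>p\<in>frontier U. \<exists>V g. open V \<and> p \<in> V \<and> smooth_fun g \<and>
        U \<inter> V = {x\<in>V. g x < 0} \<and> frechet_derivative g (at p) \<noteq> (\<lambda>v. 0))"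

definition strictly_convex :: "R3 set \<Rightarrow> bool" where
  "strictly_convex U \<longleftrightarrow> convex U \<and>
     (\<forall>x\<in>closure U. \<forall>y\<in>closure U. x \<noteq> y \<longrightarrow> open_segment x y \<subseteq> U)"

definition weighted_length :: "(R3 \<Rightarrow> real) \<Rightarrow> (real \<Rightarrow> R3) \<Rightarrow> ennreal" where
  "weighted_length f \<gamma> =
     (\<integral>\<^sup>+ s\<in>{0..1}. ennreal (f (\<gamma> s) * norm (vector_derivative \<gamma> (at s))) \<partial>lebesgue)"

definition lipschitz_arcs :: "R3 \<Rightarrow> R3 \<Rightarrow> (real \<Rightarrow> R3) set" where
  "lipschitz_arcs x y = {\<gamma>. (\<exists>L. L-lipschitz_on {0..1} \<gamma>) \<and> \<gamma> 0 = x \<and> \<gamma> 1 = y}"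

definition dist_f :: "(R3 \<Rightarrow> real) \<Rightarrow> R3 \<Rightarrow> R3 \<Rightarrow> real" where
  "dist_f f x y = enn2real (INF \<gamma>\<in>lipschitz_arcs x y. weighted_length f \<gamma>)"

definition enlarged :: "R3 set \<Rightarrow> real \<Rightarrow> R3 set" where
  "enlarged \<omega> \<delta> = (if \<delta> = 0 then \<omega> else {x + v | x v. x \<in> \<omega> \<and> v \<in> ball 0 \<delta>})"

definition alpha :: "real \<Rightarrow> R3 set \<Rightarrow> real \<Rightarrow> R3 \<Rightarrow> real" where
  "alpha b \<omega> \<delta> x = (if x \<in> enlarged \<omega> \<delta> then b\<^sup>2 else 1)"

definition delta0 :: "R3 set \<Rightarrow> R3 set \<Rightarrow> real" where
  "delta0 \<Omega> \<omega> = 10 powi (-2) * min 1 (setdist (frontier \<omega>) (frontier \<Omega>))"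

text \<open>Optimal matching cost L(C,d) for P = {p_0..p_(k-1)}, N = {n_0..n_(k-1)}.\<close>
definition match_cost :: "(R3 \<Rightarrow> R3 \<Rightarrow> real) \<Rightarrow> nat \<Rightarrow> (nat \<Rightarrow> R3) \<Rightarrow> (nat \<Rightarrow> R3) \<Rightarrow> real" where
  "match_cost d k p n = Min {(\<Sum>i<k. d (p i) (n (\<sigma> i))) | \<sigma>. \<sigma> permutes {..<k}}"

end

theory Submission
  imports Defs
begin

lemma nn_integral_add_le_meas:
  assumes g: "g \<in> borel_measurable M"
  shows "(\<integral>\<^sup>+x. F x + g x \<partial>M) \<le> integral\<^sup>N M F + integral\<^sup>N M g"
proof -
  have "integral\<^sup>S M h \<le> integral\<^sup>N M F + integral\<^sup>N M g"
    if h: "simple_function M h" "h \<le> (\<lambda>x. F x + g x)" "\<forall>x. h x < top" for h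
  proof -
    have hm: "h \<in> borel_measurable M" using h by (simp add: borel_measurable_simple_function)
    have "integral\<^sup>S M h = integral\<^sup>N M h" using nn_integral_eq_simple_integral[OF h(1)] by simp
    also have "\<dots> \<le> (\<integral>\<^sup>+x. (h x - g x) + g x \<partial>M)"
      by (intro nn_integral_mono) (auto simp: diff_add_self_ennreal not_le)
    also have "\<dots> = (\<integral>\<^sup>+x. h x - g x \<partial>M) + integral\<^sup>N M g"
      by (rule nn_integral_add) (use hm g in auto)
    also have "(\<integral>\<^sup>+x. h x - g x \<partial>M) \<le> integral\<^sup>N M F"
    proof (intro nn_integral_mono)
      fix x show "h x - g x \<le> F x" using h(2,3) unfolding le_fun_def
        by (metis ennreal_minus_le_iff add.commute less_irrefl)
    qed
    finally show ?thesis by (simp add: add_right_mono order_trans)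
  qed
  then show ?thesis unfolding nn_integral_def_finite[of _ "\<lambda>x. F x + g x"] by (intro SUP_least) auto
qed

lemma vd_local_bound:
  fixes f :: "real \<Rightarrow> 'a::real_normed_vector"
  assumes d: "(f has_vector_derivative D) (at s)" and r: "r > 0"
    and lip: "\<And>u. \<bar>u - s\<bar> < r \<Longrightarrow> norm (f u - f s) \<le> M * \<bar>u - s\<bar>"
  shows "norm D \<le> M"
proof (rule field_le_epsilon)
  fix e :: real assume e: "e > 0"
  from d have "((\<lambda>y. norm (f y - f s - (y - s) *\<^sub>R D) / norm (y - s)) \<longlongrightarrow> 0) (at s)"
    unfolding has_vector_derivative_def has_derivative_iff_norm by auto
  hence ev1: "eventually (\<lambda>y. norm (f y - f s - (y - s) *\<^sub>R D) / norm (y - s) < e) (at s)"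
    using e by (auto dest: order_tendstoD)
  have ev2: "eventually (\<lambda>y. \<bar>y - s\<bar> < r \<and> y \<noteq> s) (at s)"
    using r unfolding eventually_at by (auto simp: dist_real_def intro!: exI[of _ r])
  have ev: "eventually (\<lambda>y. (\<bar>y - s\<bar> < r \<and> y \<noteq> s) \<and> norm (f y - f s - (y - s) *\<^sub>R D) / norm (y - s) < e) (at s)"
    using ev1 ev2 by eventually_elim auto
  then obtain y where y: "\<bar>y - s\<bar> < r" "y \<noteq> s" "norm (f y - f s - (y - s) *\<^sub>R D) / norm (y - s) < e"
    using eventually_happens[OF ev] by auto
  have pos: "\<bar>y - s\<bar> > 0" using y by auto
  have q: "norm (f y - f s - (y - s) *\<^sub>R D) \<le> e * \<bar>y - s\<bar>"
    using y(3) pos by (simp add: divide_less_eq)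
  have "\<bar>y - s\<bar> * norm D = norm ((y - s) *\<^sub>R D)" by simp
  also have "\<dots> \<le> norm (f y - f s) + norm (f y - f s - (y - s) *\<^sub>R D)"
    by (metis norm_triangle_ineq4 diff_diff_eq2 diff_self diff_zero add.commute norm_minus_commute order_refl
        norm_triangle_sub)
  also have "\<dots> \<le> M * \<bar>y - s\<bar> + e * \<bar>y - s\<bar>" using lip[OF y(1)] q by linarith
  finally have "\<bar>y - s\<bar> * norm D \<le> \<bar>y - s\<bar> * (M + e)" by (simp add: algebra_simps)
  then show "norm D \<le> M + e" using pos by simp
qed

lemma vd_eq_open:
  assumes "open T" "s \<in> T" "\<And>u. u \<in> T \<Longrightarrow> f u = g u"
  shows "vector_derivative f (at s) = vector_derivative g (at s)"
proof -
  have "(f has_vector_derivative D) (at s) \<longleftrightarrow> (g has_vector_derivative D) (at s)" for D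
    using has_vector_derivative_transform_within_open[of f D s T g]
      has_vector_derivative_transform_within_open[of g D s T f] assms by auto
  then show ?thesis unfolding vector_derivative_def by simp
qed

lemma vd_scale_le:
  fixes f g :: "real \<Rightarrow> 'a::real_normed_vector"
  assumes l: "0 < l" "l \<le> 1" and T: "open T" "s \<in> T" and eq: "\<And>u. u \<in> T \<Longrightarrow> g u = c + l *\<^sub>R (f u - c)"
  shows "norm (vector_derivative g (at s)) \<le> norm (vector_derivative f (at s))"
proof (cases "\<exists>D. (f has_vector_derivative D) (at s)")
  case True
  then obtain D where D: "(f has_vector_derivative D) (at s)" by auto
  have "((\<lambda>u. c + l *\<^sub>R (f u - c)) has_vector_derivative l *\<^sub>R D) (at s)"
    using D by (auto intro!: derivative_eq_intros)
  then have "(g has_vector_derivative l *\<^sub>R D) (at s)"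
    by (rule has_vector_derivative_transform_within_open[OF _ T]) (simp add: eq)
  then have "vector_derivative g (at s) = l *\<^sub>R D" by (rule vector_derivative_at)
  moreover have "vector_derivative f (at s) = D" using D by (rule vector_derivative_at)
  ultimately show ?thesis using l by (simp add: mult_left_le_one_le)
next
  case False
  have nG: "\<not> (g has_vector_derivative E) (at s)" for E
  proof
    assume E: "(g has_vector_derivative E) (at s)"
    have "((\<lambda>u. c + (1/l) *\<^sub>R (g u - c)) has_vector_derivative (1/l) *\<^sub>R E) (at s)"
      using E by (auto intro!: derivative_eq_intros)
    then have "(f has_vector_derivative (1/l) *\<^sub>R E) (at s)"
      by (rule has_vector_derivative_transform_within_open[OF _ T]) (use l in \<open>simp add: eq\<close>)
    then show False using False by auto
  qed
  have "(\<lambda>D. (g has_vector_derivative D) (at s)) = (\<lambda>D. (f has_vector_derivative D) (at s))"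
    using False nG by auto
  then show ?thesis unfolding vector_derivative_def by simp
qed

lemma clamp_lip: "\<bar>max 0 (min 1 (a::real)) - max 0 (min 1 b)\<bar> \<le> \<bar>a - b\<bar>"
  by (simp add: max_def min_def abs_if)

lemma min_lip: "\<bar>min (a::real) b - min c d\<bar> \<le> max \<bar>a - c\<bar> \<bar>b - d\<bar>"
  by (simp add: max_def min_def abs_if)

lemma key:
  fixes fW fW' :: "R3 \<Rightarrow> real" and W' :: "R3 set" and c :: R3
  assumes f0: "\<And>z. 0 \<le> fW z" and f1: "\<And>z. fW z \<le> 1" and f0': "\<And>z. 0 \<le> fW' z"
    and f2: "\<And>z. z \<notin> W' \<Longrightarrow> fW z \<le> fW' z"
    and f3: "\<And>z. fW (c + l *\<^sub>R (z - c)) \<le> fW' z"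
    and bnd: "\<And>z. z \<in> W' \<Longrightarrow> norm (z - c) \<le> R0"
    and l: "0 < l" "l \<le> 1"
    and \<gamma>: "\<gamma> \<in> lipschitz_arcs x y" and e: "e > 0"
  shows "\<exists>\<eta>\<in>lipschitz_arcs x y. weighted_length fW \<eta> \<le> weighted_length fW' \<gamma> + ennreal (2*(1-l)*R0 + e)"
proof -
  obtain L where L: "L-lipschitz_on {0..1} \<gamma>" and \<gamma>0: "\<gamma> 0 = x" and \<gamma>1: "\<gamma> 1 = y"
    using \<gamma> by (auto simp: lipschitz_arcs_def)
  have L0: "0 \<le> L" using L by (rule lipschitz_on_nonneg)
  have Ld: "norm (\<gamma> u - \<gamma> s) \<le> L * \<bar>u - s\<bar>" if "u \<in> {0..1}" "s \<in> {0..1}" for u s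
    using lipschitz_onD[OF L that] by (simp add: dist_norm dist_real_def)
  define S where "S = {s\<in>{0..1}. \<gamma> s \<in> W'}"
  show ?thesis
  proof (cases "S = {}")
    case True
    have "weighted_length fW \<gamma> \<le> weighted_length fW' \<gamma>"
      unfolding weighted_length_def
    proof (intro nn_integral_mono)
      fix s
      show "ennreal (fW (\<gamma> s) * norm (vector_derivative \<gamma> (at s))) * indicator {0..1} s
         \<le> ennreal (fW' (\<gamma> s) * norm (vector_derivative \<gamma> (at s))) * indicator {0..1} s"
      proof (cases "s \<in> {0..1}")
        case True
        then have "\<gamma> s \<notin> W'" using \<open>S = {}\<close> by (auto simp: S_def)
        then show ?thesis using f2 by (auto intro!: ennreal_leI mult_right_mono)
      qed simp
    qed
    then show ?thesis using \<gamma> by (intro bexI[of _ \<gamma>]) (auto intro: add_increasing2)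
  next
    case False
    define nd :: R3 where "nd = (SOME D. False)"
    define \<tau> where "\<tau> = e / (8*L + 2*norm nd + 1)"
    have den: "8*L + 2*norm nd + 1 > 0" using L0 norm_ge_zero[of nd] by linarith
    have \<tau>0: "\<tau> > 0" using e den by (simp add: \<tau>_def)
    have \<tau>e: "\<tau> * (8*L + 2*norm nd) \<le> e"
    proof -
      have "\<tau> * (8*L + 2*norm nd + 1) = e" using den by (simp add: \<tau>_def)
      then show ?thesis using \<tau>0 by (simp add: algebra_simps)
    qed
    have Ssub: "S \<subseteq> {0..1}" by (auto simp: S_def)
    have bb: "bdd_below S" "bdd_above S" using Ssub by (auto intro!: bdd_belowI[of _ 0] bdd_aboveI[of _ 1])
    define t1 where "t1 = Inf S"
    define t2 where "t2 = Sup S"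
    have t1le: "t1 \<le> s" "s \<le> t2" if "s \<in> S" for s
      using that bb by (auto simp: t1_def t2_def intro: cInf_lower cSup_upper)
    have t1r: "0 \<le> t1" "t2 \<le> 1"
      using False Ssub by (auto simp: t1_def t2_def intro!: cInf_greatest cSup_least)
    obtain s1 where s1: "s1 \<in> S" "s1 < t1 + \<tau>"
      using cInf_less_iff[OF False bb(1), of "t1 + \<tau>"] \<tau>0 by (auto simp: t1_def)
    obtain s2 where s2: "s2 \<in> S" "t2 - \<tau> < s2"
      using less_cSup_iff[OF False bb(2), of "t2 - \<tau>"] \<tau>0 by (auto simp: t2_def)
    have R0: "0 \<le> R0" using bnd s1(1) by (auto simp: S_def intro: order_trans[OF norm_ge_zero])
    define a1 where "a1 = max 0 (t1 - \<tau>)"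
    define a2 where "a2 = min 1 (t2 + \<tau>)"
    define ph1 where "ph1 s = max 0 (min 1 ((s - a1) / \<tau>))" for s
    define ph2 where "ph2 s = max 0 (min 1 ((a2 - s) / \<tau>))" for s
    define lam where "lam s = 1 - (1 - l) * min (ph1 s) (ph2 s)" for s
    define \<eta> where "\<eta> s = c + lam s *\<^sub>R (\<gamma> s - c)" for s
    have ph: "0 \<le> ph1 s" "ph1 s \<le> 1" "0 \<le> ph2 s" "ph2 s \<le> 1" for s
      by (auto simp: ph1_def ph2_def)
    have lam: "l \<le> lam s" "lam s \<le> 1" for s
    proof -
      define m where "m = min (ph1 s) (ph2 s)"
      have m: "0 \<le> m" "m \<le> 1" using ph[of s] by (auto simp: m_def)
      have "(1-l)*m \<le> (1-l)" using m l by (intro mult_left_le) auto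
      moreover have "0 \<le> (1-l)*m" using m l by auto
      ultimately show "l \<le> lam s" "lam s \<le> 1" unfolding lam_def m_def[symmetric] by linarith+
    qed
    have lamlip: "\<bar>lam u - lam s\<bar> \<le> (1 - l) / \<tau> * \<bar>u - s\<bar>" for u s
    proof -
      have p1: "\<bar>ph1 u - ph1 s\<bar> \<le> \<bar>u - s\<bar> / \<tau>"
      proof -
        have "\<bar>ph1 u - ph1 s\<bar> \<le> \<bar>(u - a1) / \<tau> - (s - a1) / \<tau>\<bar>" unfolding ph1_def by (rule clamp_lip)
        also have "\<dots> = \<bar>u - s\<bar> / \<tau>" using \<tau>0 by (simp add: diff_divide_distrib[symmetric] abs_divide)
        finally show ?thesis .
      qed
      have p2: "\<bar>ph2 u - ph2 s\<bar> \<le> \<bar>u - s\<bar> / \<tau>"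
      proof -
        have "\<bar>ph2 u - ph2 s\<bar> \<le> \<bar>(a2 - u) / \<tau> - (a2 - s) / \<tau>\<bar>" unfolding ph2_def by (rule clamp_lip)
        also have "\<dots> = \<bar>u - s\<bar> / \<tau>" using \<tau>0 by (simp add: diff_divide_distrib[symmetric] abs_divide abs_minus_commute)
        finally show ?thesis .
      qed
      have "\<bar>min (ph1 u) (ph2 u) - min (ph1 s) (ph2 s)\<bar> \<le> \<bar>u - s\<bar> / \<tau>"
        using min_lip[of "ph1 u" "ph2 u" "ph1 s" "ph2 s"] p1 p2 by linarith
      then have "(1 - l) * \<bar>min (ph1 u) (ph2 u) - min (ph1 s) (ph2 s)\<bar> \<le> (1 - l) * (\<bar>u - s\<bar> / \<tau>)"
        using l by (intro mult_left_mono) auto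
      moreover have "lam u - lam s = (1 - l) * (min (ph1 s) (ph2 s) - min (ph1 u) (ph2 u))"
        by (simp add: lam_def algebra_simps)
      then have "\<bar>lam u - lam s\<bar> = (1 - l) * \<bar>min (ph1 u) (ph2 u) - min (ph1 s) (ph2 s)\<bar>"
        using l by (simp add: abs_mult abs_minus_commute)
      moreover have "(1 - l) * (\<bar>u - s\<bar> / \<tau>) = (1 - l) / \<tau> * \<bar>u - s\<bar>" by simp
      ultimately show ?thesis by linarith
    qed
    have etadiff: "norm (\<eta> u - \<eta> s) \<le> \<bar>lam u - lam s\<bar> * norm (\<gamma> u - c) + lam s * norm (\<gamma> u - \<gamma> s)" for u s
    proof -
      have "\<eta> u - \<eta> s = (lam u - lam s) *\<^sub>R (\<gamma> u - c) + lam s *\<^sub>R (\<gamma> u - \<gamma> s)"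
        by (simp add: \<eta>_def algebra_simps)
      then have "norm (\<eta> u - \<eta> s) \<le> norm ((lam u - lam s) *\<^sub>R (\<gamma> u - c)) + norm (lam s *\<^sub>R (\<gamma> u - \<gamma> s))"
        by (metis norm_triangle_ineq)
      then show ?thesis using lam[of s] l by simp
    qed
    have lam01: "lam 0 = 1" "lam 1 = 1"
    proof -
      have "(0 - a1) / \<tau> \<le> 0" using \<tau>0 by (intro divide_nonpos_pos) (auto simp: a1_def)
      then have "ph1 0 = 0" by (simp add: ph1_def)
      then show "lam 0 = 1" using ph[of 0] by (simp add: lam_def)
      have "(a2 - 1) / \<tau> \<le> 0" using \<tau>0 by (intro divide_nonpos_pos) (auto simp: a2_def)
      then have "ph2 1 = 0" by (simp add: ph2_def)
      then show "lam 1 = 1" using ph[of 1] by (simp add: lam_def)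
    qed
    define G where "G = norm (x - c) + L"
    have Gb: "norm (\<gamma> u - c) \<le> G" if "u \<in> {0..1}" for u
    proof -
      have "norm (\<gamma> u - c) \<le> norm (\<gamma> u - \<gamma> 0) + norm (\<gamma> 0 - c)" using norm_triangle_ineq[of "\<gamma> u - \<gamma> 0" "\<gamma> 0 - c"] by simp
      also have "norm (\<gamma> u - \<gamma> 0) \<le> L" using Ld[OF that, of 0] that L0 by (auto intro: order_trans mult_left_le)
      finally show ?thesis using \<gamma>0 by (simp add: G_def norm_minus_commute)
    qed
    have G0: "0 \<le> G" using L0 by (simp add: G_def)
    have \<eta>lip: "((1 - l) / \<tau> * G + L)-lipschitz_on {0..1} \<eta>"
    proof (rule lipschitz_onI)
      fix u s :: real assume us: "u \<in> {0..1}" "s \<in> {0..1}"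
      have "norm (\<eta> u - \<eta> s) \<le> (1 - l) / \<tau> * \<bar>u - s\<bar> * G + 1 * (L * \<bar>u - s\<bar>)"
        using etadiff[of u s] lamlip[of u s] Gb[OF us(1)] Ld[OF us] lam[of s] l \<tau>0 G0 L0
        by (intro order_trans[OF etadiff] add_mono mult_mono) auto
      then show "dist (\<eta> u) (\<eta> s) \<le> ((1 - l) / \<tau> * G + L) * dist u s"
        by (simp add: dist_norm dist_real_def algebra_simps)
    next
      show "0 \<le> (1 - l) / \<tau> * G + L" using l \<tau>0 G0 L0 by auto
    qed
    have \<eta>arc: "\<eta> \<in> lipschitz_arcs x y"
      using \<eta>lip lam01 \<gamma>0 \<gamma>1 by (auto simp: lipschitz_arcs_def \<eta>_def)
    define M where "M = (1 - l) / \<tau> * (R0 + 3 * L * \<tau>) + L"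
    define Kc where "Kc = M + norm nd"
    have M0: "0 \<le> M" using l \<tau>0 R0 L0 by (simp add: M_def)
    define g where "g s = ennreal Kc * indicator {a1..a1+\<tau>} s + ennreal Kc * indicator {a2-\<tau>..a2} s" for s
    have pw: "ennreal (fW (\<eta> s) * norm (vector_derivative \<eta> (at s))) * indicator {0..1} s
        \<le> ennreal (fW' (\<gamma> s) * norm (vector_derivative \<gamma> (at s))) * indicator {0..1} s + g s"
      if s: "s \<noteq> 0" "s \<noteq> 1" for s
    proof (cases "s \<in> {0..1}")
      case False then show ?thesis by simp
    next
      case True
      then have s01: "0 < s" "s < 1" using s by auto
      have a1t1: "a1 \<le> t1" "t1 \<le> a1 + \<tau>" using t1r \<tau>0 by (auto simp: a1_def)
      have a2t2: "t2 \<le> a2" "a2 - \<tau> \<le> t2" using t1r \<tau>0 by (auto simp: a2_def)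
      let ?nE = "norm (vector_derivative \<eta> (at s))"
      let ?nG = "norm (vector_derivative \<gamma> (at s))"
      have AB: "fW (\<eta> s) * ?nE \<le> fW' (\<gamma> s) * ?nG \<or>
          ((s \<in> {a1..a1+\<tau>} \<or> s \<in> {a2-\<tau>..a2}) \<and> fW (\<eta> s) * ?nE \<le> Kc)"
      proof -
        consider "s < a1" | "a2 < s" | "a1 + \<tau> < s \<and> s < a2 - \<tau>" | "s \<in> {a1..a1+\<tau>} \<or> s \<in> {a2-\<tau>..a2}"
          by force
        then show ?thesis
        proof cases
          case 1
          have eqT: "\<eta> u = \<gamma> u" if "u \<in> {..<a1}" for u
          proof -
            have "(u - a1) / \<tau> \<le> 0" using that \<tau>0 by (intro divide_nonpos_pos) auto
            then have "ph1 u = 0" by (simp add: ph1_def)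
            then have "lam u = 1" using ph[of u] by (simp add: lam_def)
            then show ?thesis by (simp add: \<eta>_def)
          qed
          have "vector_derivative \<eta> (at s) = vector_derivative \<gamma> (at s)"
            by (rule vd_eq_open[of "{..<a1}"]) (use 1 eqT in auto)
          moreover have "\<eta> s = \<gamma> s" using eqT 1 by auto
          moreover have "s \<notin> S" using 1 a1t1 t1le by force
          then have "\<gamma> s \<notin> W'" using True by (auto simp: S_def)
          ultimately show ?thesis using f2 by (auto intro: mult_right_mono)
        next
          case 2
          have eqT: "\<eta> u = \<gamma> u" if "u \<in> {a2<..}" for u
          proof -
            have "(a2 - u) / \<tau> \<le> 0" using that \<tau>0 by (intro divide_nonpos_pos) auto
            then have "ph2 u = 0" by (simp add: ph2_def)
            then have "lam u = 1" using ph[of u] by (simp add: lam_def)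
            then show ?thesis by (simp add: \<eta>_def)
          qed
          have "vector_derivative \<eta> (at s) = vector_derivative \<gamma> (at s)"
            by (rule vd_eq_open[of "{a2<..}"]) (use 2 eqT in auto)
          moreover have "\<eta> s = \<gamma> s" using eqT 2 by auto
          moreover have "s \<notin> S" using 2 a2t2 t1le by force
          then have "\<gamma> s \<notin> W'" using True by (auto simp: S_def)
          ultimately show ?thesis using f2 by (auto intro: mult_right_mono)
        next
          case 3
          have eqT: "\<eta> u = c + l *\<^sub>R (\<gamma> u - c)" if "u \<in> {a1+\<tau><..<a2-\<tau>}" for u
          proof -
            have "1 \<le> (u - a1) / \<tau>" "1 \<le> (a2 - u) / \<tau>" using that \<tau>0 by (auto simp: divide_simps)
            then have "ph1 u = 1" "ph2 u = 1" by (auto simp: ph1_def ph2_def)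
            then have "lam u = l" by (simp add: lam_def)
            then show ?thesis by (simp add: \<eta>_def)
          qed
          have "?nE \<le> ?nG" by (rule vd_scale_le[OF l, of "{a1+\<tau><..<a2-\<tau>}"]) (use 3 eqT in auto)
          moreover have "fW (\<eta> s) \<le> fW' (\<gamma> s)" using eqT[of s] 3 f3 by auto
          ultimately have "fW (\<eta> s) * ?nE \<le> fW' (\<gamma> s) * ?nG"
            using f0 f0' by (intro mult_mono) auto
          then show ?thesis by blast
        next
          case 4
          obtain s' where s': "s' \<in> S" "\<bar>s - s'\<bar> \<le> 2 * \<tau>"
          proof (cases "s \<in> {a1..a1+\<tau>}")
            case True
            then show ?thesis using that[of s1] s1 t1le[of s1] a1t1 by auto
          next
            case False
            then have "s \<in> {a2-\<tau>..a2}" using 4 by auto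
            then show ?thesis using that[of s2] s2 t1le[of s2] a2t2 by auto
          qed
          have "?nE \<le> Kc"
          proof (cases "\<exists>D. (\<eta> has_vector_derivative D) (at s)")
            case True
            then obtain D where D: "(\<eta> has_vector_derivative D) (at s)" by auto
            have "norm D \<le> M"
            proof (rule vd_local_bound[OF D, of "min (min s (1 - s)) \<tau>"])
              show "0 < min (min s (1 - s)) \<tau>" using s01 \<tau>0 by auto
              fix u assume u: "\<bar>u - s\<bar> < min (min s (1 - s)) \<tau>"
              then have u01: "u \<in> {0..1}" by auto
              have s'01: "s' \<in> {0..1}" using s' Ssub by auto
              have "norm (\<gamma> u - c) \<le> norm (\<gamma> u - \<gamma> s') + norm (\<gamma> s' - c)"
                using norm_triangle_ineq[of "\<gamma> u - \<gamma> s'" "\<gamma> s' - c"] by simp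
              also have "norm (\<gamma> u - \<gamma> s') \<le> L * \<bar>u - s'\<bar>" using Ld[OF u01 s'01] .
              also have "L * \<bar>u - s'\<bar> \<le> L * (3 * \<tau>)" using u s'(2) L0 by (intro mult_left_mono) auto
              also have "norm (\<gamma> s' - c) \<le> R0" using s'(1) bnd by (auto simp: S_def)
              finally have gb: "norm (\<gamma> u - c) \<le> R0 + 3 * L * \<tau>" by simp
              have "norm (\<eta> u - \<eta> s) \<le> (1 - l) / \<tau> * \<bar>u - s\<bar> * (R0 + 3 * L * \<tau>) + 1 * (L * \<bar>u - s\<bar>)"
                using lamlip[of u s] gb Ld[OF u01 \<open>s \<in> {0..1}\<close>] lam[of s] l \<tau>0
                by (intro order_trans[OF etadiff] add_mono mult_mono) auto
              moreover have "(1 - l) / \<tau> * \<bar>u - s\<bar> * (R0 + 3 * L * \<tau>) + 1 * (L * \<bar>u - s\<bar>) = M * \<bar>u - s\<bar>"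
                using \<tau>0 by (simp add: M_def field_simps)
              ultimately show "norm (\<eta> u - \<eta> s) \<le> M * \<bar>u - s\<bar>" by linarith
            qed
            moreover have "vector_derivative \<eta> (at s) = D" using D by (rule vector_derivative_at)
            ultimately have "?nE \<le> M" by simp
            then show ?thesis unfolding Kc_def using norm_ge_zero[of nd] by linarith
          next
            case False
            then have "(\<lambda>D. (\<eta> has_vector_derivative D) (at s)) = (\<lambda>D. False)" by auto
            then have "vector_derivative \<eta> (at s) = nd" unfolding vector_derivative_def nd_def by simp
            then show ?thesis using M0 by (simp add: Kc_def)
          qed
          moreover have "fW (\<eta> s) * ?nE \<le> 1 * ?nE" using f0 f1 by (intro mult_right_mono) auto
          ultimately show ?thesis using 4 by auto
        qed
      qed
      have Kc0: "0 \<le> Kc" using M0 by (simp add: Kc_def)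
      show ?thesis
      proof (cases "fW (\<eta> s) * ?nE \<le> fW' (\<gamma> s) * ?nG")
        case True
        then show ?thesis using \<open>s \<in> {0..1}\<close> by (auto intro!: add_increasing2 ennreal_leI simp: g_def)
      next
        case False
        then have B: "s \<in> {a1..a1+\<tau>} \<or> s \<in> {a2-\<tau>..a2}" "fW (\<eta> s) * ?nE \<le> Kc" using AB by auto
        have "ennreal (fW (\<eta> s) * ?nE) \<le> ennreal Kc" using B(2) by (rule ennreal_leI)
        also have "ennreal Kc \<le> g s" using B(1) by (auto simp: g_def)
        also have "g s \<le> ennreal (fW' (\<gamma> s) * ?nG) * indicator {0..1} s + g s" by (rule add_increasing) auto
        finally show ?thesis using \<open>s \<in> {0..1}\<close> by simp
      qed
    qed
    have "weighted_length fW \<eta> \<le> (\<integral>\<^sup>+s. ennreal (fW' (\<gamma> s) * norm (vector_derivative \<gamma> (at s))) * indicator {0..1} s + g s \<partial>lebesgue)"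
      unfolding weighted_length_def
    proof (rule nn_integral_mono_AE)
      have "AE s in lborel. s \<noteq> 0" "AE s in lborel. s \<noteq> (1::real)" by (rule AE_lborel_singleton)+
      then have "AE s in lebesgue. s \<noteq> 0 \<and> s \<noteq> (1::real)" by (auto intro: AE_completion)
      then show "AE s in lebesgue. ennreal (fW (\<eta> s) * norm (vector_derivative \<eta> (at s))) * indicator {0..1} s
        \<le> ennreal (fW' (\<gamma> s) * norm (vector_derivative \<gamma> (at s))) * indicator {0..1} s + g s"
        by eventually_elim (use pw in auto)
    qed
    also have "\<dots> \<le> weighted_length fW' \<gamma> + integral\<^sup>N lebesgue g"
      unfolding weighted_length_def
    proof (rule nn_integral_add_le_meas)
      show "g \<in> borel_measurable lebesgue" unfolding g_def by (intro measurable_completion) measurable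
    qed
    also have "integral\<^sup>N lebesgue g = ennreal (2 * Kc * \<tau>)"
    proof -
      have "integral\<^sup>N lebesgue g = integral\<^sup>N lborel g" by (rule nn_integral_completion)
      also have "\<dots> = ennreal Kc * emeasure lborel {a1..a1+\<tau>} + ennreal Kc * emeasure lborel {a2-\<tau>..a2}"
        unfolding g_def by (subst nn_integral_add) (auto simp: nn_integral_cmult_indicator)
      also have "\<dots> = ennreal (2 * Kc * \<tau>)"
        using \<tau>0 M0 by (simp add: Kc_def ennreal_mult[symmetric] ennreal_plus[symmetric] del: ennreal_plus)
      finally show ?thesis .
    qed
    also have "2 * Kc * \<tau> \<le> 2*(1-l)*R0 + e"
    proof -
      have "2 * Kc * \<tau> = 2*(1-l)*R0 + \<tau> * (6*(1-l)*L + 2*L + 2*norm nd)"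
        using \<tau>0 by (simp add: Kc_def M_def field_simps)
      also have "\<tau> * (6*(1-l)*L + 2*L + 2*norm nd) \<le> \<tau> * (8*L + 2*norm nd)"
        using \<tau>0 l L0 by (intro mult_left_mono) (auto simp: algebra_simps intro: mult_left_le)
      finally show ?thesis using \<tau>e by linarith
    qed
    then have "weighted_length fW' \<gamma> + ennreal (2 * Kc * \<tau>) \<le> weighted_length fW' \<gamma> + ennreal (2*(1-l)*R0 + e)"
      by (intro add_left_mono ennreal_leI)
    finally show ?thesis using \<eta>arc by blast
  qed
qed

lemma straight_bound:
  fixes f :: "R3 \<Rightarrow> real"
  assumes f0: "\<And>z. 0 \<le> f z" and f1: "\<And>z. f z \<le> 1"
  shows "(INF \<gamma>\<in>lipschitz_arcs x y. weighted_length f \<gamma>) \<le> ennreal (norm (y - x))"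
proof -
  define \<gamma> where "\<gamma> s = x + s *\<^sub>R (y - x)" for s :: real
  have "\<gamma> \<in> lipschitz_arcs x y"
    unfolding lipschitz_arcs_def
  proof (intro CollectI conjI exI)
    show "(norm (y - x))-lipschitz_on {0..1} \<gamma>"
    proof (rule lipschitz_onI)
      fix u s :: real
      have "\<gamma> u - \<gamma> s = (u - s) *\<^sub>R (y - x)" by (simp add: \<gamma>_def algebra_simps)
      then show "dist (\<gamma> u) (\<gamma> s) \<le> norm (y - x) * dist u s" by (simp add: dist_norm dist_real_def)
    qed simp
  qed (auto simp: \<gamma>_def)
  then have "(INF \<gamma>\<in>lipschitz_arcs x y. weighted_length f \<gamma>) \<le> weighted_length f \<gamma>" by (rule INF_lower)
  also have "\<dots> \<le> (\<integral>\<^sup>+s. ennreal (norm (y - x)) * indicator {0..1::real} s \<partial>lebesgue)"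
    unfolding weighted_length_def
  proof (intro nn_integral_mono)
    fix s :: real
    have "(\<gamma> has_vector_derivative (y - x)) (at s)" unfolding \<gamma>_def by (auto intro!: derivative_eq_intros)
    then have "vector_derivative \<gamma> (at s) = y - x" by (rule vector_derivative_at)
    then show "ennreal (f (\<gamma> s) * norm (vector_derivative \<gamma> (at s))) * indicator {0..1} s
        \<le> ennreal (norm (y - x)) * indicator {0..1} s"
      using f0 f1 by (auto intro!: ennreal_leI mult_left_le_one_le split: split_indicator)
  qed
  also have "\<dots> = ennreal (norm (y - x))"
    by (simp add: nn_integral_completion nn_integral_cmult_indicator)
  finally show ?thesis .
qed

lemma dist_f_mono:
  fixes f g :: "R3 \<Rightarrow> real"
  assumes "\<And>z. f z \<le> g z" "\<And>z. 0 \<le> f z" "\<And>z. g z \<le> 1"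
  shows "dist_f f x y \<le> dist_f g x y"
proof -
  have g0: "0 \<le> g z" for z using assms(1,2)[of z] by linarith
  have "(INF \<gamma>\<in>lipschitz_arcs x y. weighted_length f \<gamma>) \<le> (INF \<gamma>\<in>lipschitz_arcs x y. weighted_length g \<gamma>)"
    unfolding weighted_length_def
    by (intro INF_mono bexI nn_integral_mono mult_right_mono ennreal_leI mult_right_mono)
      (auto intro: assms(1) mult_right_mono)
  moreover have "(INF \<gamma>\<in>lipschitz_arcs x y. weighted_length g \<gamma>) < top"
    using straight_bound[of g x y] g0 assms(3) by (simp add: order_le_less_trans)
  ultimately show ?thesis unfolding dist_f_def by (rule enn2real_mono)
qed

lemma dist_f_shift:
  fixes fW fW' :: "R3 \<Rightarrow> real" and W' :: "R3 set" and c :: R3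
  assumes f0: "\<And>z. 0 \<le> fW z" and f1: "\<And>z. fW z \<le> 1" and f0': "\<And>z. 0 \<le> fW' z" and f1': "\<And>z. fW' z \<le> 1"
    and f2: "\<And>z. z \<notin> W' \<Longrightarrow> fW z \<le> fW' z"
    and f3: "\<And>z. fW (c + l *\<^sub>R (z - c)) \<le> fW' z"
    and bnd: "\<And>z. z \<in> W' \<Longrightarrow> norm (z - c) \<le> R0" and R0: "0 \<le> R0"
    and l: "0 < l" "l \<le> 1"
  shows "dist_f fW x y \<le> dist_f fW' x y + 2*(1-l)*R0"
proof -
  define D where "D f = (INF \<gamma>\<in>lipschitz_arcs x y. weighted_length f \<gamma>)" for f
  have Dfin: "D fW' < top" using straight_bound[of fW' x y] f0' f1' by (simp add: D_def order_le_less_trans)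
  have a0: "0 \<le> 2*(1-l)*R0" using l R0 by auto
  have main: "D fW \<le> D fW' + ennreal (2*(1-l)*R0)"
  proof (rule ennreal_le_epsilon)
    fix e :: real assume e: "0 < e"
    have "D fW' < D fW' + ennreal (e/2)" using Dfin e by (cases "D fW'") auto
    then obtain \<gamma> where \<gamma>: "\<gamma> \<in> lipschitz_arcs x y" "weighted_length fW' \<gamma> < D fW' + ennreal (e/2)"
      unfolding D_def by (auto simp: INF_less_iff)
    obtain \<eta> where \<eta>: "\<eta> \<in> lipschitz_arcs x y"
      "weighted_length fW \<eta> \<le> weighted_length fW' \<gamma> + ennreal (2*(1-l)*R0 + e/2)"
      using key[where fW=fW and fW'=fW' and W'=W' and c=c and l=l, OF f0 f1 f0' f2 f3 bnd l \<gamma>(1), of "e/2"] e by auto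
    have "D fW \<le> weighted_length fW \<eta>" unfolding D_def using \<eta>(1) by (rule INF_lower)
    also have "\<dots> \<le> weighted_length fW' \<gamma> + ennreal (2*(1-l)*R0 + e/2)" by (rule \<eta>(2))
    also have "\<dots> \<le> D fW' + ennreal (e/2) + ennreal (2*(1-l)*R0 + e/2)"
      using \<gamma>(2) by (intro add_right_mono) auto
    also have "\<dots> = D fW' + ennreal (2*(1-l)*R0) + ennreal e"
      using a0 e by (simp add: ennreal_plus[symmetric] add.assoc del: ennreal_plus)
    finally show "D fW \<le> D fW' + ennreal (2*(1-l)*R0) + ennreal e" .
  qed
  have "enn2real (D fW) \<le> enn2real (D fW' + ennreal (2*(1-l)*R0))"
    using main Dfin by (intro enn2real_mono) auto
  also have "\<dots> = enn2real (D fW') + 2*(1-l)*R0"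
    using Dfin a0 by (subst enn2real_plus) auto
  finally show ?thesis unfolding dist_f_def D_def .
qed

lemma scale_in:
  fixes \<omega> :: "R3 set"
  assumes cvx: "convex \<omega>" and r: "r > 0" "ball c r \<subseteq> \<omega>" and d: "0 \<le> \<delta>" "\<delta> < \<delta>'"
    and w: "w \<in> \<omega>" and v: "norm v < \<delta>'"
  shows "c + (r / (r + (\<delta>' - \<delta>))) *\<^sub>R ((w + v) - c) \<in> enlarged \<omega> \<delta>"
proof -
  define \<epsilon> where "\<epsilon> = \<delta>' - \<delta>"
  define l where "l = r / (r + \<epsilon>)"
  have \<epsilon>0: "\<epsilon> > 0" using d by (simp add: \<epsilon>_def)
  have d'0: "\<delta>' > 0" using d by linarith
  have l01: "0 < l" "l < 1" using r \<epsilon>0 by (auto simp: l_def divide_simps)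
  have omr: "1 - l = \<epsilon> / (r + \<epsilon>)" using r \<epsilon>0 by (simp add: l_def field_simps)
  have "l = (r / \<epsilon>) * (1 - l)" unfolding omr unfolding l_def using \<epsilon>0 r by (simp add: field_simps)
  then have ll: "l / (1 - l) = r / \<epsilon>" using l01 by (simp add: field_simps)
  define u1 where "u1 = (l * \<delta> / \<delta>') *\<^sub>R v"
  define u2 where "u2 = (l * \<epsilon> / \<delta>') *\<^sub>R v"
  define q where "q = c + (1 / (1 - l)) *\<^sub>R u2"
  have "norm (q - c) = (l / (1 - l)) * (\<epsilon> / \<delta>') * norm v"
    using l01 \<epsilon>0 d'0 by (simp add: q_def u2_def abs_mult)
  also have "\<dots> = (r / \<epsilon>) * (\<epsilon> / \<delta>') * norm v" by (simp only: ll)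
  also have "\<dots> = r * (norm v / \<delta>')" using \<epsilon>0 by simp
  also have "\<dots> < r * 1" using r v d'0 by (intro mult_strict_left_mono) auto
  finally have "q \<in> ball c r" by (simp add: dist_norm norm_minus_commute)
  then have q: "q \<in> \<omega>" using r by auto
  define p where "p = l *\<^sub>R w + (1 - l) *\<^sub>R q"
  have p: "p \<in> \<omega>" unfolding p_def using l01 by (intro convexD[OF cvx w q]) auto
  have u12: "u1 + u2 = l *\<^sub>R v" using d'0 by (simp add: u1_def u2_def \<epsilon>_def scaleR_add_left[symmetric] field_simps)
  have qq: "(1 - l) *\<^sub>R q = (1 - l) *\<^sub>R c + u2" using l01 by (simp add: q_def scaleR_add_right)
  have "c + l *\<^sub>R ((w + v) - c) = l *\<^sub>R w + (1 - l) *\<^sub>R c + l *\<^sub>R v" by (simp add: algebra_simps)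
  also have "\<dots> = l *\<^sub>R w + ((1 - l) *\<^sub>R c + u2) + u1" unfolding u12[symmetric] by (simp add: algebra_simps)
  also have "\<dots> = p + u1" unfolding p_def qq by simp
  finally have eq: "c + l *\<^sub>R ((w + v) - c) = p + u1" .
  show ?thesis
  proof (cases "\<delta> = 0")
    case True
    then have "u1 = 0" by (simp add: u1_def)
    then show ?thesis using eq p True by (simp add: enlarged_def l_def \<epsilon>_def)
  next
    case False
    have "norm u1 = l * (\<delta> / \<delta>') * norm v" using d l01 d'0 by (simp add: u1_def abs_mult)
    also have "\<dots> \<le> 1 * (\<delta> / \<delta>') * norm v" using l01 d d'0 by (intro mult_right_mono) auto
    also have "\<dots> < \<delta>"
    proof -
      have "\<delta> / \<delta>' * norm v < \<delta> / \<delta>' * \<delta>'" using v d False d'0 by (intro mult_strict_left_mono) auto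
      then show ?thesis using d'0 by simp
    qed
    finally have "u1 \<in> ball 0 \<delta>" by simp
    then show ?thesis using eq p False by (auto simp: enlarged_def l_def \<epsilon>_def)
  qed
qed

lemma match_cost_lip:
  assumes "\<And>a a'. dB a a' \<le> dA a a'" "\<And>a a'. dA a a' \<le> dB a a' + K"
  shows "\<bar>match_cost dA k p n - match_cost dB k p n\<bar> \<le> K * real k"
proof -
  define P where "P = {\<sigma>. \<sigma> permutes {..<k}}"
  define SA where "SA \<sigma> = (\<Sum>i<k. dA (p i) (n (\<sigma> i)))" for \<sigma>
  define SB where "SB \<sigma> = (\<Sum>i<k. dB (p i) (n (\<sigma> i)))" for \<sigma>
  have eqA: "match_cost dA k p n = Min (SA ` P)" unfolding match_cost_def SA_def P_def
    by (rule arg_cong[where f=Min]) blast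
  have eqB: "match_cost dB k p n = Min (SB ` P)" unfolding match_cost_def SB_def P_def
    by (rule arg_cong[where f=Min]) blast
  have fin: "finite P" unfolding P_def by (rule finite_permutations) simp
  have ne: "P \<noteq> {}" unfolding P_def using permutes_id by blast
  have AB: "SA \<sigma> \<le> SB \<sigma> + K * real k" for \<sigma>
  proof -
    have "SA \<sigma> \<le> (\<Sum>i<k. dB (p i) (n (\<sigma> i)) + K)" unfolding SA_def by (intro sum_mono assms(2))
    then show ?thesis by (simp add: SB_def sum.distrib mult.commute)
  qed
  have BA: "SB \<sigma> \<le> SA \<sigma>" for \<sigma> unfolding SA_def SB_def by (intro sum_mono assms(1))
  have "Min (SA ` P) \<in> SA ` P" using fin ne by (intro Min_in) auto
  then obtain \<sigma>A where \<sigma>A: "\<sigma>A \<in> P" "SA \<sigma>A = Min (SA ` P)" by auto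
  have "Min (SB ` P) \<in> SB ` P" using fin ne by (intro Min_in) auto
  then obtain \<sigma>B where \<sigma>B: "\<sigma>B \<in> P" "SB \<sigma>B = Min (SB ` P)" by auto
  have "Min (SA ` P) \<le> SA \<sigma>B" using fin \<sigma>B(1) by (intro Min_le) auto
  also have "\<dots> \<le> Min (SB ` P) + K * real k" using AB[of \<sigma>B] \<sigma>B(2) by linarith
  finally have 1: "Min (SA ` P) \<le> Min (SB ` P) + K * real k" .
  have "Min (SB ` P) \<le> SB \<sigma>A" using fin \<sigma>A(1) by (intro Min_le) auto
  also have "\<dots> \<le> Min (SA ` P)" using BA \<sigma>A(2) by (metis)
  finally have 2: "Min (SB ` P) \<le> Min (SA ` P)" .
  show ?thesis unfolding eqA eqB using 1 2 by linarith
qed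

theorem mainTheorem6:
  fixes \<Omega> \<omega> :: "R3 set" and b :: real
  assumes "open \<Omega>" "bounded \<Omega>" "convex \<Omega>" "smooth_boundary \<Omega>"
    and "open \<omega>" "bounded \<omega>" "strictly_convex \<omega>" "smooth_boundary \<omega>"
    and "closure \<omega> \<subseteq> \<Omega>"
    and "0 < b" "b < 1"
  shows "\<exists>C>0.
    (\<forall>\<delta> \<delta>' x y. 0 \<le> \<delta> \<and> \<delta> < \<delta>' \<and> \<delta>' \<le> delta0 \<Omega> \<omega> \<longrightarrow>
        dist_f (alpha b \<omega> \<delta>') x y \<le> dist_f (alpha b \<omega> \<delta>) x y \<and>
        dist_f (alpha b \<omega> \<delta>) x y \<le> dist_f (alpha b \<omega> \<delta>') x y + C * \<bar>\<delta>' - \<delta>\<bar>) \<and>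
    (\<forall>\<delta> \<delta>' k p n. 0 \<le> \<delta> \<and> \<delta> < \<delta>' \<and> \<delta>' \<le> delta0 \<Omega> \<omega> \<and>
        inj_on p {..<k} \<and> inj_on n {..<k} \<and> p ` {..<k} \<inter> n ` {..<k} = {} \<longrightarrow>
        \<bar>match_cost (dist_f (alpha b \<omega> \<delta>)) k p n - match_cost (dist_f (alpha b \<omega> \<delta>')) k p n\<bar>
          \<le> C * real k * \<bar>\<delta>' - \<delta>\<bar>)"
proof (cases "\<omega> = {}")
  case True
  have A: "alpha b \<omega> d = (\<lambda>_. 1)" for d by (auto simp: alpha_def enlarged_def True fun_eq_iff)
  show ?thesis by (intro exI[of _ 1]) (auto simp: A)
next
  case False
  then obtain c where c: "c \<in> \<omega>" by auto
  obtain r where r: "r > 0" "ball c r \<subseteq> \<omega>" using assms(5) c open_contains_ball by blast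
  obtain B where B: "\<And>w. w \<in> \<omega> \<Longrightarrow> dist c w \<le> B" using assms(6) bounded_any_center[of \<omega> c] by auto
  have B0: "0 \<le> B" using B[OF c] by simp
  have cvx: "convex \<omega>" using assms(7) by (simp add: strictly_convex_def)
  define R0 where "R0 = B + 1"
  define C where "C = 2 * R0 / r + 1"
  have R0: "0 \<le> R0" using B0 by (simp add: R0_def)
  have "0 \<le> 2 * R0 / r" using R0 r by simp
  then have C0: "C > 0" by (simp add: C_def)
  have b2: "0 \<le> b\<^sup>2" "b\<^sup>2 \<le> 1" using assms(10,11) by (auto simp: power_le_one)
  have al: "0 \<le> alpha b \<omega> d z" "alpha b \<omega> d z \<le> 1" for d z using b2 by (auto simp: alpha_def)
  have d0: "delta0 \<Omega> \<omega> \<le> 1/100"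
  proof -
    have "(10::real) powi (-2) = 1/100" by (simp add: power_int_minus)
    moreover have "min 1 (setdist (frontier \<omega>) (frontier \<Omega>)) \<le> 1" by simp
    ultimately show ?thesis unfolding delta0_def by simp
  qed
  have P1: "dist_f (alpha b \<omega> \<delta>') x y \<le> dist_f (alpha b \<omega> \<delta>) x y \<and>
        dist_f (alpha b \<omega> \<delta>) x y \<le> dist_f (alpha b \<omega> \<delta>') x y + C * \<bar>\<delta>' - \<delta>\<bar>"
    if d: "0 \<le> \<delta>" "\<delta> < \<delta>'" "\<delta>' \<le> delta0 \<Omega> \<omega>" for \<delta> \<delta>' x y
  proof -
    define W' where "W' = enlarged \<omega> \<delta>'"
    have d'0: "\<delta>' > 0" "\<delta>' \<le> 1" using d d0 by auto
    have W'def: "W' = {x + v |x v. x \<in> \<omega> \<and> v \<in> ball 0 \<delta>'}" using d'0 by (simp add: W'_def enlarged_def)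
    have sub: "enlarged \<omega> \<delta> \<subseteq> W'"
    proof
      fix z assume z: "z \<in> enlarged \<omega> \<delta>"
      show "z \<in> W'"
      proof (cases "\<delta> = 0")
        case True
        then have "z \<in> \<omega>" using z by (simp add: enlarged_def)
        then have "z + 0 \<in> W'" unfolding W'def using d'0 by force
        then show ?thesis by simp
      next
        case False
        then obtain w v where "z = w + v" "w \<in> \<omega>" "norm v < \<delta>" using z by (auto simp: enlarged_def)
        then show ?thesis using d unfolding W'def by force
      qed
    qed
    have part1: "dist_f (alpha b \<omega> \<delta>') x y \<le> dist_f (alpha b \<omega> \<delta>) x y"
    proof (rule dist_f_mono)
      fix z show "alpha b \<omega> \<delta>' z \<le> alpha b \<omega> \<delta> z"
        using sub b2 by (auto simp: alpha_def W'_def)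
    qed (use al in auto)
    define l where "l = r / (r + (\<delta>' - \<delta>))"
    have l: "0 < l" "l \<le> 1" using r d by (auto simp: l_def)
    have "dist_f (alpha b \<omega> \<delta>) x y \<le> dist_f (alpha b \<omega> \<delta>') x y + 2*(1-l)*R0"
    proof (rule dist_f_shift[where W'=W' and c=c])
      fix z assume "z \<notin> W'"
      then show "alpha b \<omega> \<delta> z \<le> alpha b \<omega> \<delta>' z" using sub by (auto simp: alpha_def W'_def)
    next
      fix z
      show "alpha b \<omega> \<delta> (c + l *\<^sub>R (z - c)) \<le> alpha b \<omega> \<delta>' z"
      proof (cases "z \<in> W'")
        case True
        then obtain w v where wv: "z = w + v" "w \<in> \<omega>" "norm v < \<delta>'" unfolding W'def by auto
        have "c + l *\<^sub>R (z - c) \<in> enlarged \<omega> \<delta>"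
          unfolding l_def wv(1) by (rule scale_in[OF cvx r d(1,2) wv(2,3)])
        then show ?thesis using True by (simp add: alpha_def W'_def)
      next
        case False
        then show ?thesis using al by (simp add: alpha_def W'_def)
      qed
    next
      fix z assume "z \<in> W'"
      then obtain w v where wv: "z = w + v" "w \<in> \<omega>" "norm v < \<delta>'" unfolding W'def by auto
      have "norm (z - c) \<le> norm (w - c) + norm v" using norm_triangle_ineq[of "w - c" v] wv(1)
        by (simp add: algebra_simps)
      also have "norm (w - c) \<le> B" using B[OF wv(2)] by (simp add: dist_norm norm_minus_commute)
      finally show "norm (z - c) \<le> R0" using wv(3) d'0 by (simp add: R0_def)
    qed (use al l R0 in auto)
    also have "2*(1-l)*R0 \<le> C * \<bar>\<delta>' - \<delta>\<bar>"
    proof -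
      have "1 - l = (\<delta>' - \<delta>) / (r + (\<delta>' - \<delta>))" using r d by (simp add: l_def field_simps)
      also have "\<dots> \<le> (\<delta>' - \<delta>) / r" using r d by (intro divide_left_mono) auto
      finally have h1: "1 - l \<le> (\<delta>' - \<delta>) / r" .
      have h2: "(1-l)*(2*R0) \<le> ((\<delta>' - \<delta>) / r)*(2*R0)" using h1 R0 by (intro mult_right_mono) auto
      have h3: "((\<delta>' - \<delta>) / r)*(2*R0) \<le> C * (\<delta>' - \<delta>)" using d r by (simp add: C_def field_simps)
      have h4: "\<bar>\<delta>' - \<delta>\<bar> = \<delta>' - \<delta>" using d by simp
      show ?thesis unfolding h4 using h2 h3 by (simp add: mult_ac)
    qed
    finally show ?thesis using part1 by simp
  qed
  have part1': "\<forall>\<delta> \<delta>' x y. 0 \<le> \<delta> \<and> \<delta> < \<delta>' \<and> \<delta>' \<le> delta0 \<Omega> \<omega> \<longrightarrow>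
        dist_f (alpha b \<omega> \<delta>') x y \<le> dist_f (alpha b \<omega> \<delta>) x y \<and>
        dist_f (alpha b \<omega> \<delta>) x y \<le> dist_f (alpha b \<omega> \<delta>') x y + C * \<bar>\<delta>' - \<delta>\<bar>"
    using P1 by blast
  have part2: "\<forall>\<delta> \<delta>' k p n. 0 \<le> \<delta> \<and> \<delta> < \<delta>' \<and> \<delta>' \<le> delta0 \<Omega> \<omega> \<and>
        inj_on p {..<k} \<and> inj_on n {..<k} \<and> p ` {..<k} \<inter> n ` {..<k} = {} \<longrightarrow>
        \<bar>match_cost (dist_f (alpha b \<omega> \<delta>)) k p n - match_cost (dist_f (alpha b \<omega> \<delta>')) k p n\<bar>
          \<le> C * real k * \<bar>\<delta>' - \<delta>\<bar>"
  proof (intro allI impI)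
    fix \<delta> \<delta>' :: real and k :: nat and p n :: "nat \<Rightarrow> R3"
    assume h: "0 \<le> \<delta> \<and> \<delta> < \<delta>' \<and> \<delta>' \<le> delta0 \<Omega> \<omega> \<and>
        inj_on p {..<k} \<and> inj_on n {..<k} \<and> p ` {..<k} \<inter> n ` {..<k} = {}"
    have "\<bar>match_cost (dist_f (alpha b \<omega> \<delta>)) k p n - match_cost (dist_f (alpha b \<omega> \<delta>')) k p n\<bar>
        \<le> C * \<bar>\<delta>' - \<delta>\<bar> * real k"
      by (rule match_cost_lip) (use P1 h in auto)
    then show "\<bar>match_cost (dist_f (alpha b \<omega> \<delta>)) k p n - match_cost (dist_f (alpha b \<omega> \<delta>')) k p n\<bar>
        \<le> C * real k * \<bar>\<delta>' - \<delta>\<bar>" by (simp add: mult_ac)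
  qed
  show ?thesis using C0 part1' part2 by blast
qed

end
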